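(* Let $k$ be a field of characteristic zero, $n\ge1$, $S=k[x_1,\ldots,x_n]$, and $(S,L)$ a triangularizable Lie–Rinehart algebra with basis $\alpha_1,\ldots,\alpha_n$ and enveloping algebra $U$. If $p>0$ and $u\in F_pU$ satisfy $d^0(u)\equiv0\pmod{F_{p-2}\mathcal{X}^1}$, then $u\in F_{p-1}U$.
   Context: Triangularizable: $L\subseteq\operatorname{Der}(S)$ is an $S$-submodule and Lie subalgebra which is a free $S$-module with basis of derivations $\alpha_1,\ldots,\alpha_n$ such that $\alpha_i(x_j)=0$ for $i>j$ and $\alpha_1(x_1)\cdots\alpha_n(x_n)\ne0$. $U$ is the universal enveloping algebra of the Lie–Rinehart algebra $(S,L)$, in which $[\alpha,s]=\alpha(s)$ for $\alpha\in L$, $s\in S$. For $I=(i_n,\ldots,i_1)\in\mathbb{N}^n$, $\alpha^I=\alpha_n^{i_n}\cdots\alpha_1^{i_1}$ and $|I|=\sum i_m$; these form a left $S$-basis of $U$, and $F_pU$ is the $S$-span of $\alpha^I$ with $|I|\le p$ ($F_pU=0$ for $p<0$). With $W=\operatorname{span}_k(x_1,\ldots,x_n)$ and dual basis $\hat x_1,\ldots,\hat x_n$, $\mathcal{X}^1=U\otimes_k W^*$, with elements $\sum_k u_k\hat x_k$; $d^0:U\to\mathcal{X}^1$ is $d^0(u)=\sum_{k=1}^n[u,x_k]\hat x_k$; and $F_p\mathcal{X}^1$ is the $k$-span of $f\alpha^I\hat x_k$ with $f\in S$, $|I|\le p$. *)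

theory Defs
  imports "HOL-Library.Poly_Mapping"
begin

text \<open>The polynomial ring S = k[x_i : i in 'n], for a finite linearly ordered
index type 'n (standing for {1..n}); monomials are exponent vectors.\<close>
type_synonym ('n, 'k) pol = "('n \<Rightarrow>\<^sub>0 nat) \<Rightarrow>\<^sub>0 'k"

definition pconst :: "'k::zero \<Rightarrow> ('n, 'k) pol" where
  "pconst c = Poly_Mapping.single 0 c"

definition pvar :: "'n \<Rightarrow> ('n, 'k::{zero,one}) pol" where
  "pvar i = Poly_Mapping.single (Poly_Mapping.single i 1) 1"

definition is_derivation :: "(('n, 'k::field) pol \<Rightarrow> ('n, 'k) pol) \<Rightarrow> bool" where
  "is_derivation D \<longleftrightarrow>
     (\<forall>f g. D (f + g) = D f + D g) \<and>
     (\<forall>c f. D (pconst c * f) = pconst c * D f) \<and>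
     (\<forall>f g. D (f * g) = f * D g + g * D f)"

definition Sspan :: "('n::finite \<Rightarrow> ('n, 'k::field) pol \<Rightarrow> ('n, 'k) pol)
                     \<Rightarrow> (('n, 'k) pol \<Rightarrow> ('n, 'k) pol) set" where
  "Sspan \<alpha> = {D. \<exists>c. D = (\<lambda>f. \<Sum>i\<in>UNIV. c i * \<alpha> i f)}"

definition lie_bracket :: "('a \<Rightarrow> 'a::ab_group_add) \<Rightarrow> ('a \<Rightarrow> 'a) \<Rightarrow> ('a \<Rightarrow> 'a)" where
  "lie_bracket D E = (\<lambda>f. D (E f) - E (D f))"

definition triangularizable :: "('n::{finite,linorder} \<Rightarrow> ('n, 'k::field) pol \<Rightarrow> ('n, 'k) pol) \<Rightarrow> bool" where
  "triangularizable \<alpha> \<longleftrightarrow>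
     (\<forall>i. is_derivation (\<alpha> i)) \<and>
     (\<forall>c. (\<lambda>f. \<Sum>i\<in>UNIV. c i * \<alpha> i f) = (\<lambda>f. 0) \<longrightarrow> (\<forall>i. c i = 0)) \<and>
     (\<forall>D\<in>Sspan \<alpha>. \<forall>E\<in>Sspan \<alpha>. lie_bracket D E \<in> Sspan \<alpha>) \<and>
     (\<forall>i j. j < i \<longrightarrow> \<alpha> i (pvar j) = 0) \<and>
     (\<Prod>i\<in>UNIV. \<alpha> i (pvar i)) \<noteq> 0"

text \<open>Multi-indices I : 'n => nat; alpha^I = alpha_n^{i_n} ... alpha_1^{i_1}
(descending order of indices), |I| = sum of entries.\<close>
definition mono_U :: "('n::{finite,linorder} \<Rightarrow> 'u::monoid_mult) \<Rightarrow> ('n \<Rightarrow> nat) \<Rightarrow> 'u" where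
  "mono_U a I = prod_list (map (\<lambda>i. a i ^ I i) (rev (sorted_list_of_set (UNIV :: 'n set))))"

definition mdeg :: "('n::finite \<Rightarrow> nat) \<Rightarrow> nat" where
  "mdeg I = (\<Sum>i\<in>UNIV. I i)"

definition PBW_comb :: "(('n, 'k) pol \<Rightarrow> 'u::ring_1) \<Rightarrow> ('n::{finite,linorder} \<Rightarrow> 'u)
                        \<Rightarrow> (('n \<Rightarrow> nat) \<Rightarrow> ('n, 'k::zero) pol) \<Rightarrow> 'u" where
  "PBW_comb \<iota> a f = (\<Sum>I\<in>{I. f I \<noteq> 0}. \<iota> (f I) * mono_U a I)"

text \<open>U (type 'u) with iS : S -> U and iL : L -> U is the universal enveloping
algebra of the Lie-Rinehart algebra (S,L): the structure maps satisfy the defining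
relations and the ordered monomials alpha^I form a left S-basis (PBW). These
properties determine U up to isomorphism.\<close>
definition is_enveloping :: "('n::{finite,linorder} \<Rightarrow> ('n, 'k::field) pol \<Rightarrow> ('n, 'k) pol)
     \<Rightarrow> (('n, 'k) pol \<Rightarrow> 'u::ring_1) \<Rightarrow> ((('n, 'k) pol \<Rightarrow> ('n, 'k) pol) \<Rightarrow> 'u) \<Rightarrow> bool" where
  "is_enveloping \<alpha> iS iL \<longleftrightarrow>
     iS 1 = 1 \<and> (\<forall>f g. iS (f + g) = iS f + iS g) \<and> (\<forall>f g. iS (f * g) = iS f * iS g) \<and>
     (\<forall>D\<in>Sspan \<alpha>. \<forall>E\<in>Sspan \<alpha>. iL (\<lambda>f. D f + E f) = iL D + iL E) \<and>
     (\<forall>s. \<forall>D\<in>Sspan \<alpha>. iL (\<lambda>f. s * D f) = iS s * iL D) \<and>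
     (\<forall>D\<in>Sspan \<alpha>. \<forall>E\<in>Sspan \<alpha>. iL (lie_bracket D E) = iL D * iL E - iL E * iL D) \<and>
     (\<forall>D\<in>Sspan \<alpha>. \<forall>s. iL D * iS s - iS s * iL D = iS (D s)) \<and>
     (\<forall>u. \<exists>f. finite {I. f I \<noteq> 0} \<and> u = PBW_comb iS (\<lambda>i. iL (\<alpha> i)) f) \<and>
     (\<forall>f. finite {I. f I \<noteq> 0} \<and> PBW_comb iS (\<lambda>i. iL (\<alpha> i)) f = 0 \<longrightarrow> (\<forall>I. f I = 0))"

text \<open>F_p U (p an integer; empty combination gives 0 for p < 0).\<close>
definition filtU :: "(('n, 'k::zero) pol \<Rightarrow> 'u::ring_1) \<Rightarrow> ('n::{finite,linorder} \<Rightarrow> 'u) \<Rightarrow> int \<Rightarrow> 'u set" where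
  "filtU iS a p = {PBW_comb iS a f | f :: ('n \<Rightarrow> nat) \<Rightarrow> ('n, 'k) pol.
      finite {I. f I \<noteq> 0} \<and> (\<forall>I. f I \<noteq> 0 \<longrightarrow> int (mdeg I) \<le> p)}"

text \<open>X^1 = U \<otimes>_k W^*: elements sum_k u_k xhat_k, represented as 'n => 'u.
d^0(u) = sum_k [u, x_k] xhat_k; F_p X^1 = tuples with all u_k in F_p U.\<close>
definition d0 :: "(('n, 'k::{zero,one}) pol \<Rightarrow> 'u::ring_1) \<Rightarrow> 'u \<Rightarrow> ('n \<Rightarrow> 'u)" where
  "d0 iS u = (\<lambda>k. u * iS (pvar k) - iS (pvar k) * u)"

definition filtX1 :: "(('n, 'k::zero) pol \<Rightarrow> 'u::ring_1) \<Rightarrow> ('n::{finite,linorder} \<Rightarrow> 'u) \<Rightarrow> int \<Rightarrow> ('n \<Rightarrow> 'u) set" where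
  "filtX1 iS a p = {v. \<forall>k. v k \<in> filtU iS a p}"

end

theory Submission
  imports Defs
begin


definition add1 :: "('n \<Rightarrow> nat) \<Rightarrow> 'n \<Rightarrow> ('n \<Rightarrow> nat)" where
  "add1 I a = I(a := Suc (I a))"

definition Dle :: "int \<Rightarrow> ('n::finite \<Rightarrow> nat) set" where
  "Dle q = {I. int (mdeg I) \<le> q}"

lemma finite_Dle: "finite (Dle q)"
proof -
  have "Dle q \<subseteq> {f. \<forall>x. (x \<in> (UNIV::'a set) \<longrightarrow> f x \<in> {..nat q}) \<and> (x \<notin> UNIV \<longrightarrow> f x = 0)}"
  proof
    fix I :: "'a \<Rightarrow> nat" assume "I \<in> Dle q"
    hence "int (mdeg I) \<le> q" by (simp add: Dle_def)
    moreover have "I x \<le> mdeg I" for x unfolding mdeg_def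
      by (rule member_le_sum) auto
    ultimately have "\<forall>x. I x \<le> nat q" proof (intro allI)
      fix x have "I x \<le> mdeg I" by fact
      hence "int (I x) \<le> q" using \<open>int (mdeg I) \<le> q\<close> by linarith
      thus "I x \<le> nat q" by (simp add: le_nat_iff)
    qed
    thus "I \<in> {f. \<forall>x. (x \<in> (UNIV::'a set) \<longrightarrow> f x \<in> {..nat q}) \<and> (x \<notin> UNIV \<longrightarrow> f x = 0)}"
      by simp
  qed
  moreover have "finite {f. \<forall>x. (x \<in> (UNIV::'a set) \<longrightarrow> f x \<in> {..nat q}) \<and> (x \<notin> UNIV \<longrightarrow> f x = (0::nat))}"
    by (rule finite_set_of_finite_funs) auto
  ultimately show ?thesis by (rule finite_subset)
qed

lemma mdeg_upd: "mdeg (I(m := v)) + I m = mdeg I + v"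
proof -
  have "mdeg I = I m + (\<Sum>i\<in>UNIV - {m}. I i)" unfolding mdeg_def
    by (simp add: sum.remove)
  moreover have "(\<Sum>i\<in>UNIV - {m}. (I(m:=v)) i) = (\<Sum>i\<in>UNIV - {m}. I i)" by (rule sum.cong) auto
  moreover have "mdeg (I(m:=v)) = (I(m:=v)) m + (\<Sum>i\<in>UNIV - {m}. (I(m:=v)) i)" unfolding mdeg_def
    by (rule sum.remove) auto
  ultimately show ?thesis by simp
qed

lemma mdeg_add1: "mdeg (add1 I a) = Suc (mdeg I)"
  using mdeg_upd[of I a "Suc (I a)"] by (simp add: add1_def)

lemma mdeg_zero: "mdeg (\<lambda>_. 0) = 0" by (simp add: mdeg_def)

lemma mdeg_eq0: "mdeg I = 0 \<longleftrightarrow> I = (\<lambda>_. 0)"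
  by (auto simp: mdeg_def fun_eq_iff)

lemma prod_list_step:
  fixes g :: "'n::linorder \<Rightarrow> 'u::monoid_mult"
  assumes "sorted_wrt (>) xs" "a \<in> set xs" "\<forall>j>a. I j = 0"
  shows "prod_list (map (\<lambda>i. g i ^ (add1 I a) i) xs) = g a * prod_list (map (\<lambda>i. g i ^ I i) xs)"
  using assms
proof (induction xs)
  case Nil thus ?case by simp
next
  case (Cons y ys)
  show ?case
  proof (cases "y = a")
    case True
    with Cons.prems have "a \<notin> set ys" by auto
    hence m: "map (\<lambda>i. g i ^ (add1 I a) i) ys = map (\<lambda>i. g i ^ I i) ys"
      by (auto simp: add1_def)
    have "g a ^ add1 I a a = g a * g a ^ I a" by (simp add: add1_def)
    thus ?thesis using True by (simp add: m mult.assoc)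
  next
    case False
    with Cons.prems have "a \<in> set ys" "y > a" by auto
    hence "I y = 0" "add1 I a y = 0" using Cons.prems False by (auto simp: add1_def)
    thus ?thesis using Cons.IH Cons.prems \<open>a \<in> set ys\<close> by simp
  qed
qed

lemma mono_step:
  fixes g :: "'n::{finite,linorder} \<Rightarrow> 'u::monoid_mult"
  assumes "\<forall>j>a. I j = 0"
  shows "mono_U g (add1 I a) = g a * mono_U g I"
  unfolding mono_U_def
  by (rule prod_list_step) (use assms in \<open>simp_all add: sorted_wrt_rev\<close>)

lemma prod_list_zero_aux: "prod_list (map (\<lambda>i. (g i::'u::monoid_mult) ^ (\<lambda>_. 0::nat) i) xs) = 1"
  by (induct xs) simp_all

lemma mono_zero: "mono_U (g :: 'n::{finite,linorder} \<Rightarrow> 'u::monoid_mult) (\<lambda>_. 0) = 1"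
  unfolding mono_U_def by (rule prod_list_zero_aux)

lemma top_decomp:
  fixes I :: "'n::{finite,linorder} \<Rightarrow> nat"
  assumes "I \<noteq> (\<lambda>_. 0)"
  obtains J b where "I = add1 J b" "\<forall>j>b. J j = 0"
proof -
  let ?S = "{j. I j > 0}"
  have ne: "?S \<noteq> {}" using assms by (auto simp: fun_eq_iff)
  define b where "b = Max ?S"
  have bS: "b \<in> ?S" unfolding b_def using ne by (intro Max_in) auto
  have above: "\<forall>j>b. I j = 0" unfolding b_def using ne
    by (metis (mono_tags) Max_ge finite not_gr_zero leD mem_Collect_eq)
  show ?thesis
    by (rule that[of "I(b := I b - 1)" b]) (use bS above in \<open>auto simp: add1_def fun_eq_iff\<close>)
qed



locale env =
  fixes \<alpha> :: "'n::{finite,linorder} \<Rightarrow> ('n, 'k::field_char_0) pol \<Rightarrow> ('n, 'k) pol"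
    and iS :: "('n, 'k) pol \<Rightarrow> 'u::ring_1"
    and iL :: "(('n, 'k) pol \<Rightarrow> ('n, 'k) pol) \<Rightarrow> 'u"
  assumes tri: "triangularizable \<alpha>" and env: "is_enveloping \<alpha> iS iL"
begin

abbreviation g where "g i \<equiv> iL (\<alpha> i)"
abbreviation mn where "mn I \<equiv> mono_U (\<lambda>i. iL (\<alpha> i)) I"

definition FF :: "int \<Rightarrow> 'u set" where
  "FF q = {\<Sum>I\<in>Dle q. iS (f I) * mn I | f. True}"

lemma iS_add: "iS (a + b) = iS a + iS b" using env by (simp add: is_enveloping_def)
lemma iS_mult: "iS (a * b) = iS a * iS b" using env by (simp add: is_enveloping_def)
lemma iS_1: "iS 1 = 1" using env by (simp add: is_enveloping_def)
lemma iS_0: "iS 0 = 0" using iS_add[of 0 0] by simp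
lemma iS_minus: "iS (- a) = - iS a" using iS_add[of a "-a"] iS_0 by (simp add: add_eq_0_iff2)
lemma iS_diff: "iS (a - b) = iS a - iS b" using iS_add[of a "-b"] iS_minus by simp
lemma iS_sum: "iS (sum h A) = (\<Sum>x\<in>A. iS (h x))"
  by (induct A rule: infinite_finite_induct) (simp_all add: iS_0 iS_add)
lemma iS_comm: "iS a * iS b = iS b * iS a"
  by (metis iS_mult mult.commute)

lemma is_der: "is_derivation (\<alpha> i)" using tri by (simp add: triangularizable_def)
lemma der_add: "\<alpha> i (a + b) = \<alpha> i a + \<alpha> i b" using is_der by (simp add: is_derivation_def)
lemma der_0: "\<alpha> i 0 = 0" using der_add[of i 0 0] by simp

lemma iL_add: "D \<in> Sspan \<alpha> \<Longrightarrow> E \<in> Sspan \<alpha> \<Longrightarrow> iL (\<lambda>f. D f + E f) = iL D + iL E"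
  using env unfolding is_enveloping_def by blast
lemma iL_smul: "D \<in> Sspan \<alpha> \<Longrightarrow> iL (\<lambda>f. s * D f) = iS s * iL D"
  using env unfolding is_enveloping_def by blast
lemma iL_br: "D \<in> Sspan \<alpha> \<Longrightarrow> E \<in> Sspan \<alpha> \<Longrightarrow> iL (lie_bracket D E) = iL D * iL E - iL E * iL D"
  using env unfolding is_enveloping_def by blast
lemma iL_comm: "D \<in> Sspan \<alpha> \<Longrightarrow> iL D * iS s - iS s * iL D = iS (D s)"
  using env unfolding is_enveloping_def by blast

lemma FF_I: "x = (\<Sum>I\<in>Dle q. iS (f I) * mn I) \<Longrightarrow> x \<in> FF q"
  unfolding FF_def mem_Collect_eq by (rule exI[of _ f]) simp
lemma FF_E: "x \<in> FF q \<Longrightarrow> \<exists>f. x = (\<Sum>I\<in>Dle q. iS (f I) * mn I)"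
  unfolding FF_def by simp

lemma alpha_in: "\<alpha> i \<in> Sspan \<alpha>"
proof -
  have "(\<Sum>j\<in>UNIV. (if j = i then 1 else 0) * \<alpha> j f) = \<alpha> i f" for f
  proof -
    have "(\<Sum>j\<in>UNIV. (if j = i then 1 else 0) * \<alpha> j f) = (\<Sum>j\<in>UNIV. if j = i then \<alpha> j f else 0)"
      by (rule sum.cong) auto
    also have "\<dots> = \<alpha> i f" by simp
    finally show ?thesis .
  qed
  hence "\<alpha> i = (\<lambda>f. \<Sum>j\<in>UNIV. (if j = i then 1 else 0) * \<alpha> j f)" by auto
  thus ?thesis unfolding Sspan_def mem_Collect_eq by (rule exI[of _ "\<lambda>j. if j = i then 1 else 0"])
qed

lemma comm_gen: "g a * iS s - iS s * g a = iS (\<alpha> a s)"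
  using env alpha_in by (simp add: is_enveloping_def)

lemma Sspan_sub: "(\<lambda>f. \<Sum>i\<in>A. c i * \<alpha> i f) \<in> Sspan \<alpha>"
proof -
  have "(\<Sum>i\<in>UNIV. (if i \<in> A then c i else 0) * \<alpha> i f) = (\<Sum>i\<in>A. c i * \<alpha> i f)" for f
  proof -
    have "(\<Sum>i\<in>UNIV. (if i \<in> A then c i else 0) * \<alpha> i f) = (\<Sum>i\<in>UNIV. if i \<in> A then c i * \<alpha> i f else 0)"
      by (rule sum.cong) auto
    also have "\<dots> = (\<Sum>i\<in>UNIV \<inter> A. c i * \<alpha> i f)" by (rule sum.inter_restrict[symmetric]) simp
    finally show ?thesis by simp
  qed
  hence "(\<lambda>f. \<Sum>i\<in>A. c i * \<alpha> i f) = (\<lambda>f. \<Sum>i\<in>UNIV. (if i \<in> A then c i else 0) * \<alpha> i f)"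
    by auto
  thus ?thesis unfolding Sspan_def mem_Collect_eq by (rule exI[of _ "\<lambda>i. if i \<in> A then c i else 0"])
qed

lemma iL_sum_A: "iL (\<lambda>f. \<Sum>i\<in>A. c i * \<alpha> i f) = (\<Sum>i\<in>A. iS (c i) * g i)"
proof (induct A rule: infinite_finite_induct)
  case (infinite A) thus ?case by simp
next
  case empty
  have z: "(\<lambda>f::('n,'k) pol. 0::('n,'k) pol) \<in> Sspan \<alpha>" using Sspan_sub[where A="{}" and c=c] by simp
  have "iL (\<lambda>f. 0 + 0) = iL (\<lambda>f. 0) + iL (\<lambda>f. 0)"
    using iL_add[OF z z] by simp
  hence "iL (\<lambda>f. 0) = iL (\<lambda>f. 0) + iL (\<lambda>f. 0)" by simp
  thus ?case by simp
next
  case (insert x F)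
  have "iL (\<lambda>f. \<Sum>i\<in>insert x F. c i * \<alpha> i f) = iL (\<lambda>f. c x * \<alpha> x f + (\<Sum>i\<in>F. c i * \<alpha> i f))"
    using insert by simp
  also have "\<dots> = iL (\<lambda>f. c x * \<alpha> x f) + iL (\<lambda>f. \<Sum>i\<in>F. c i * \<alpha> i f)"
  proof -
    have "(\<lambda>f. c x * \<alpha> x f) \<in> Sspan \<alpha>" using Sspan_sub[where A="{x}" and c=c] by simp
    thus ?thesis using iL_add Sspan_sub[where A=F and c=c] by blast
  qed
  also have "iL (\<lambda>f. c x * \<alpha> x f) = iS (c x) * g x"
    using iL_smul alpha_in by blast
  finally show ?case using insert by simp
qed

lemma bracket: "\<exists>c. g b * g a - g a * g b = (\<Sum>i\<in>UNIV. iS (c i) * g i)"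
proof -
  have "lie_bracket (\<alpha> b) (\<alpha> a) \<in> Sspan \<alpha>" using tri alpha_in by (simp add: triangularizable_def)
  then obtain c where c: "lie_bracket (\<alpha> b) (\<alpha> a) = (\<lambda>f. \<Sum>i\<in>UNIV. c i * \<alpha> i f)"
    unfolding Sspan_def by blast
  have "iL (lie_bracket (\<alpha> b) (\<alpha> a)) = g b * g a - g a * g b"
    using env alpha_in by (simp add: is_enveloping_def)
  hence "g b * g a - g a * g b = (\<Sum>i\<in>UNIV. iS (c i) * g i)" using c iL_sum_A[of c UNIV] by simp
  thus ?thesis by blast
qed

lemma FF_zero: "0 \<in> FF q"
  by (rule FF_I[where f="\<lambda>_. 0"]) (simp add: iS_0)

lemma FF_add: "x \<in> FF q \<Longrightarrow> y \<in> FF q \<Longrightarrow> x + y \<in> FF q"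
proof -
  assume "x \<in> FF q" "y \<in> FF q"
  then obtain f h where "x = (\<Sum>I\<in>Dle q. iS (f I) * mn I)" "y = (\<Sum>I\<in>Dle q. iS (h I) * mn I)"
    using FF_E by meson
  hence "x + y = (\<Sum>I\<in>Dle q. iS (f I + h I) * mn I)"
    by (simp add: iS_add distrib_right sum.distrib)
  thus ?thesis by (rule FF_I)
qed

lemma FF_uminus: "x \<in> FF q \<Longrightarrow> - x \<in> FF q"
proof -
  assume "x \<in> FF q"
  then obtain f where "x = (\<Sum>I\<in>Dle q. iS (f I) * mn I)" using FF_E by blast
  hence "- x = (\<Sum>I\<in>Dle q. iS (- f I) * mn I)"
    by (simp add: iS_minus sum_negf)
  thus ?thesis by (rule FF_I)
qed

lemma FF_diff: "x \<in> FF q \<Longrightarrow> y \<in> FF q \<Longrightarrow> x - y \<in> FF q"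
proof -
  assume x: "x \<in> FF q" and y: "y \<in> FF q"
  have "x + - y \<in> FF q" by (rule FF_add[OF x FF_uminus[OF y]])
  thus ?thesis by simp
qed

lemma FF_sum: "(\<And>i. i \<in> A \<Longrightarrow> h i \<in> FF q) \<Longrightarrow> sum h A \<in> FF q"
  by (induct A rule: infinite_finite_induct) (auto simp: FF_zero FF_add)

lemma FF_smul: "x \<in> FF q \<Longrightarrow> iS s * x \<in> FF q"
proof -
  assume "x \<in> FF q"
  then obtain f where "x = (\<Sum>I\<in>Dle q. iS (f I) * mn I)" using FF_E by blast
  hence "iS s * x = (\<Sum>I\<in>Dle q. iS (s * f I) * mn I)"
    by (simp add: iS_mult sum_distrib_left mult.assoc)
  thus ?thesis by (rule FF_I)
qed

lemma FF_mono: "int (mdeg I) \<le> q \<Longrightarrow> iS s * mn I \<in> FF q"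
proof -
  assume "int (mdeg I) \<le> q"
  hence I: "I \<in> Dle q" by (simp add: Dle_def)
  have "(\<Sum>J\<in>Dle q. iS (if J = I then s else 0) * mn J) = (\<Sum>J\<in>Dle q. if J = I then iS s * mn I else 0)"
    by (rule sum.cong) (auto simp: iS_0)
  also have "\<dots> = iS s * mn I" using I by (simp add: sum.delta[OF finite_Dle])
  finally show ?thesis by (rule FF_I[OF sym])
qed

lemma FF_mono1: "int (mdeg I) \<le> q \<Longrightarrow> mn I \<in> FF q"
  using FF_mono[of I q 1] by (simp add: iS_1)

lemma FF_le: "q \<le> q' \<Longrightarrow> FF q \<subseteq> FF q'"
proof
  fix x assume le: "q \<le> q'" and "x \<in> FF q"
  then obtain f where x: "x = (\<Sum>I\<in>Dle q. iS (f I) * mn I)" using FF_E by blast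
  have sub: "Dle q \<subseteq> Dle q'" using le by (auto simp: Dle_def)
  have "x = (\<Sum>I\<in>Dle q'. iS (if I \<in> Dle q then f I else 0) * mn I)"
    unfolding x by (rule sum.mono_neutral_cong_left) (use sub finite_Dle in \<open>auto simp: iS_0\<close>)
  thus "x \<in> FF q'" by (rule FF_I)
qed

lemma FF_neg: "q < 0 \<Longrightarrow> x \<in> FF q \<Longrightarrow> x = 0"
proof -
  assume "q < 0" "x \<in> FF q"
  moreover have e: "Dle q = {}" using \<open>q < 0\<close> by (auto simp: Dle_def)
  ultimately obtain f where "x = (\<Sum>I\<in>Dle q. iS (f I) * mn I)" using FF_E by blast
  thus ?thesis by (simp add: e)
qed

lemma uniq:
  assumes "finite D" "(\<Sum>J\<in>D. iS (c J) * mn J) = 0" "J \<in> D"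
  shows "c J = 0"
proof -
  define f where "f = (\<lambda>J. if J \<in> D then c J else 0)"
  have sub: "{I. f I \<noteq> 0} \<subseteq> D" by (auto simp: f_def)
  hence fin: "finite {I. f I \<noteq> 0}" using assms(1) finite_subset by blast
  have "PBW_comb iS g f = (\<Sum>I\<in>D. iS (f I) * mn I)"
    unfolding PBW_comb_def by (rule sum.mono_neutral_left) (use sub assms(1) in \<open>auto simp: iS_0\<close>)
  also have "\<dots> = 0" using assms(2) by (simp add: f_def)
  finally have "\<forall>I. f I = 0" using env fin unfolding is_enveloping_def by blast
  hence "f J = 0" by blast
  thus ?thesis using assms(3) by (simp add: f_def)
qed

lemma filtU_FF: "filtU iS g q = FF q"
proof
  show "filtU iS g q \<subseteq> FF q"
  proof
    fix x assume "x \<in> filtU iS g q"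
    then obtain f where fin: "finite {I. f I \<noteq> 0}" and deg: "\<forall>I. f I \<noteq> 0 \<longrightarrow> int (mdeg I) \<le> q"
      and x: "x = PBW_comb iS g f" unfolding filtU_def by blast
    have "x = (\<Sum>I\<in>Dle q. iS (f I) * mn I)"
      unfolding x PBW_comb_def by (rule sum.mono_neutral_left) (use deg finite_Dle in \<open>auto simp: iS_0 Dle_def\<close>)
    thus "x \<in> FF q" by (rule FF_I)
  qed
next
  show "FF q \<subseteq> filtU iS g q"
  proof
    fix x assume "x \<in> FF q"
    then obtain f where x: "x = (\<Sum>I\<in>Dle q. iS (f I) * mn I)" using FF_E by blast
    define f' where "f' = (\<lambda>I. if I \<in> Dle q then f I else 0)"
    have sub: "{I. f' I \<noteq> 0} \<subseteq> Dle q" by (auto simp: f'_def)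
    hence fin: "finite {I. f' I \<noteq> 0}" using finite_Dle finite_subset by blast
    have deg: "\<forall>I. f' I \<noteq> 0 \<longrightarrow> int (mdeg I) \<le> q" using sub by (auto simp: Dle_def)
    have "PBW_comb iS g f' = (\<Sum>I\<in>Dle q. iS (f' I) * mn I)"
      unfolding PBW_comb_def by (rule sum.mono_neutral_left) (use sub finite_Dle in \<open>auto simp: iS_0\<close>)
    also have "\<dots> = x" unfolding x by (rule sum.cong) (auto simp: f'_def)
    finally show "x \<in> filtU iS g q" unfolding filtU_def using fin deg by blast
  qed
qed

end


context env begin

lemma gmul_aux:
  assumes H: "\<And>a I. mdeg I \<le> m \<Longrightarrow> g a * mn I - mn (add1 I a) \<in> FF (int m)"
    and x: "x \<in> FF (int m)"
  shows "g a * x \<in> FF (int m + 1)"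
proof -
  obtain f where xf: "x = (\<Sum>I\<in>Dle (int m). iS (f I) * mn I)" using FF_E[OF x] by blast
  have "g a * x = (\<Sum>I\<in>Dle (int m). g a * iS (f I) * mn I)"
    unfolding xf by (simp add: sum_distrib_left mult.assoc)
  also have "\<dots> \<in> FF (int m + 1)"
  proof (rule FF_sum)
    fix I :: "'n \<Rightarrow> nat" assume I: "I \<in> Dle (int m)"
    hence dI: "mdeg I \<le> m" by (simp add: Dle_def)
    have e: "g a * iS (f I) * mn I = iS (f I) * (g a * mn I - mn (add1 I a)) + iS (f I) * mn (add1 I a)
              + iS (\<alpha> a (f I)) * mn I"
    proof -
      have "g a * iS (f I) = iS (f I) * g a + iS (\<alpha> a (f I))"
        using comm_gen[of a "f I"] by (simp add: algebra_simps)
      thus ?thesis by (simp add: algebra_simps)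
    qed
    have 1: "iS (f I) * (g a * mn I - mn (add1 I a)) \<in> FF (int m + 1)"
      using FF_smul[OF H[OF dI]] FF_le[of "int m" "int m + 1"] by auto
    have 2: "iS (f I) * mn (add1 I a) \<in> FF (int m + 1)"
      by (rule FF_mono) (use dI in \<open>simp add: mdeg_add1\<close>)
    have 3: "iS (\<alpha> a (f I)) * mn I \<in> FF (int m + 1)"
      by (rule FF_mono) (use dI in simp)
    show "g a * iS (f I) * mn I \<in> FF (int m + 1)"
      unfolding e by (intro FF_add 1 2 3)
  qed
  finally show ?thesis .
qed

lemma reorder: "mdeg I \<le> n \<Longrightarrow> g a * mn I - mn (add1 I a) \<in> FF (int n)"
proof (induction n arbitrary: a I)
  case 0
  hence "\<forall>j>a. I j = 0" using mdeg_eq0[of I] by auto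
  hence "mn (add1 I a) = g a * mn I" by (rule mono_step)
  thus ?case by (simp add: FF_zero)
next
  case (Suc m)
  show ?case
  proof (cases "\<forall>j>a. I j = 0")
    case True
    hence "mn (add1 I a) = g a * mn I" by (rule mono_step)
    thus ?thesis by (simp add: FF_zero)
  next
    case False
    then obtain j where j: "j > a" "I j \<noteq> 0" by auto
    hence "I \<noteq> (\<lambda>_. 0)" by auto
    then obtain J b where IJ: "I = add1 J b" and top: "\<forall>j>b. J j = 0" by (rule top_decomp)
    have "\<not> j > b" using j top IJ by (auto simp: add1_def split: if_splits)
    hence ab: "a < b" using j by auto
    have dJ: "mdeg J \<le> m" using Suc.prems IJ by (simp add: mdeg_add1)
    have mI: "mn I = g b * mn J" unfolding IJ by (rule mono_step[OF top])
    obtain c where br: "g b * g a - g a * g b = (\<Sum>i\<in>UNIV. iS (c i) * g i)" using bracket by blast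
    define r where "r = g a * mn J - mn (add1 J a)"
    have r: "r \<in> FF (int m)" unfolding r_def by (rule Suc.IH[OF dJ])
    have top2: "\<forall>j>b. add1 J a j = 0" using top ab by (auto simp: add1_def)
    have e2: "g b * mn (add1 J a) = mn (add1 I a)"
    proof -
      have "g b * mn (add1 J a) = mn (add1 (add1 J a) b)" by (rule mono_step[OF top2, symmetric])
      also have "add1 (add1 J a) b = add1 I a" unfolding IJ using ab by (auto simp: add1_def fun_eq_iff)
      finally show ?thesis .
    qed
    have "g a * mn I - mn (add1 I a) = g b * r - (g b * g a - g a * g b) * mn J"
      unfolding mI r_def e2[symmetric] by (simp add: algebra_simps)
    also have "\<dots> = g b * r - (\<Sum>i\<in>UNIV. iS (c i) * (g i * mn J))"
      unfolding br by (simp add: sum_distrib_right mult.assoc)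
    also have "\<dots> \<in> FF (int (Suc m))"
    proof -
      have "g b * r \<in> FF (int m + 1)" by (rule gmul_aux[OF Suc.IH r])
      moreover have "(\<Sum>i\<in>UNIV. iS (c i) * (g i * mn J)) \<in> FF (int m + 1)"
      proof -
        have mJ: "mn J \<in> FF (int m)" by (rule FF_mono1) (simp add: dJ)
        show ?thesis by (intro FF_sum FF_smul gmul_aux[OF Suc.IH] mJ)
      qed
      ultimately have "g b * r - (\<Sum>i\<in>UNIV. iS (c i) * (g i * mn J)) \<in> FF (int m + 1)" by (rule FF_diff)
      thus ?thesis by (simp add: add.commute)
    qed
    finally show ?thesis .
  qed
qed

lemma gmul: "x \<in> FF q \<Longrightarrow> g a * x \<in> FF (q + 1)"
proof (cases "q < 0")
  case True
  assume "x \<in> FF q" hence "x = 0" using FF_neg True by blast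
  thus ?thesis by (simp add: FF_zero)
next
  case False
  then obtain m where q: "q = int m" by (metis nonneg_eq_int not_less)
  assume "x \<in> FF q"
  thus ?thesis unfolding q by (intro gmul_aux reorder)
qed


abbreviation adx where "adx x v \<equiv> v * iS x - iS x * v"

lemma ad_gen: "adx x (g b * v) = g b * adx x v + iS (\<alpha> b x) * v"
proof -
  have "g b * iS x = iS (\<alpha> b x) + iS x * g b" using comm_gen[of b x] by (simp add: algebra_simps)
  hence "g b * iS x * v = iS (\<alpha> b x) * v + iS x * g b * v" by (simp add: distrib_right)
  thus ?thesis by (simp add: algebra_simps)
qed

lemma ad_S: "adx x (iS f * v) = iS f * adx x v"
proof -
  have "iS x * iS f = iS f * iS x" by (rule iS_comm)
  hence "iS x * (iS f * v) = iS f * (iS x * v)" by (metis mult.assoc)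
  thus ?thesis by (simp add: algebra_simps)
qed

lemma ad_mono:
  "adx x (mn I) - (\<Sum>m\<in>UNIV. iS (of_nat (I m) * \<alpha> m x) * mn (I(m := I m - 1))) \<in> FF (int (mdeg I) - 2)"
proof (induction "mdeg I" arbitrary: I)
  case 0
  hence I0: "I = (\<lambda>_. 0)" using mdeg_eq0 by metis
  show ?case unfolding I0 by (simp add: mono_zero iS_0 FF_zero)
next
  case (Suc n)
  have "I \<noteq> (\<lambda>_. 0)"
  proof
    assume "I = (\<lambda>_. 0)" hence "mdeg I = 0" by (simp add: mdeg_zero)
    thus False using Suc.hyps(2) by simp
  qed
  then obtain J b where IJ: "I = add1 J b" and top: "\<forall>j>b. J j = 0" by (rule top_decomp)
  have dJ: "mdeg J = n" using Suc.hyps IJ by (simp add: mdeg_add1)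
  define t where "t = (\<lambda>m. of_nat (J m) * \<alpha> m x)"
  define SJ where "SJ = (\<Sum>m\<in>UNIV. iS (t m) * mn (J(m := J m - 1)))"
  define r where "r = adx x (mn J) - SJ"
  have r: "r \<in> FF (int n - 2)" unfolding r_def SJ_def t_def using Suc.hyps(1)[of J] dJ by simp
  have mI: "mn I = g b * mn J" unfolding IJ by (rule mono_step[OF top])
  have termeq: "g b * (iS (t m) * mn (J(m := J m - 1))) =
      iS (t m) * mn (I(m := I m - 1)) + iS (\<alpha> b (t m)) * mn (J(m := J m - 1))" for m
  proof (cases "J m = 0")
    case True
    hence "t m = 0" by (simp add: t_def)
    thus ?thesis by (simp add: iS_0 der_0)
  next
    case False
    have top3: "\<forall>j>b. (J(m := J m - 1)) j = 0" using top by auto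
    have "g b * mn (J(m := J m - 1)) = mn (add1 (J(m := J m - 1)) b)" by (rule mono_step[OF top3, symmetric])
    also have "add1 (J(m := J m - 1)) b = I(m := I m - 1)" unfolding IJ using False
      by (auto simp: add1_def fun_eq_iff)
    finally have e: "g b * mn (J(m := J m - 1)) = mn (I(m := I m - 1))" .
    have "g b * iS (t m) = iS (t m) * g b + iS (\<alpha> b (t m))"
      using comm_gen[of b "t m"] by (simp add: algebra_simps)
    hence "g b * (iS (t m) * mn (J(m := J m - 1))) = iS (t m) * (g b * mn (J(m := J m - 1))) + iS (\<alpha> b (t m)) * mn (J(m := J m - 1))"
      by (simp add: algebra_simps flip: mult.assoc)
    thus ?thesis unfolding e .
  qed
  have rem: "iS (\<alpha> b (t m)) * mn (J(m := J m - 1)) \<in> FF (int (Suc n) - 2)" for m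
  proof (cases "J m = 0")
    case True
    hence "t m = 0" by (simp add: t_def)
    thus ?thesis by (simp add: iS_0 der_0 FF_zero)
  next
    case False
    have "mdeg (J(m := J m - 1)) + J m = mdeg J + (J m - 1)" by (rule mdeg_upd)
    hence "mdeg (J(m := J m - 1)) = n - 1" using False dJ by simp
    moreover have "J m \<le> mdeg J" using mdeg_upd[of J m 0] by simp
    ultimately have "int (mdeg (J(m := J m - 1))) \<le> int (Suc n) - 2" using False dJ
      by (cases n) auto
    thus ?thesis by (rule FF_mono)
  qed
  have SI: "(\<Sum>m\<in>UNIV. iS (of_nat (I m) * \<alpha> m x) * mn (I(m := I m - 1)))
        = (\<Sum>m\<in>UNIV. iS (t m) * mn (I(m := I m - 1))) + iS (\<alpha> b x) * mn J"
  proof -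
    have "iS (of_nat (I m) * \<alpha> m x) * mn (I(m := I m - 1))
        = iS (t m) * mn (I(m := I m - 1)) + (if m = b then iS (\<alpha> b x) * mn J else 0)" for m
    proof (cases "m = b")
      case True
      have "I(m := I m - 1) = J" unfolding IJ True by (auto simp: add1_def fun_eq_iff)
      moreover have "I m = Suc (J m)" unfolding IJ True by (simp add: add1_def)
      ultimately show ?thesis using True by (simp add: t_def iS_add distrib_right)
    next
      case False
      hence "I m = J m" unfolding IJ by (simp add: add1_def)
      thus ?thesis using False by (simp add: t_def)
    qed
    hence "(\<Sum>m\<in>UNIV. iS (of_nat (I m) * \<alpha> m x) * mn (I(m := I m - 1)))
        = (\<Sum>m\<in>UNIV. iS (t m) * mn (I(m := I m - 1)) + (if m = b then iS (\<alpha> b x) * mn J else 0))"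
      by simp
    also have "\<dots> = (\<Sum>m\<in>UNIV. iS (t m) * mn (I(m := I m - 1))) + iS (\<alpha> b x) * mn J"
      by (simp add: sum.distrib)
    finally show ?thesis .
  qed
  have "adx x (mn I) = g b * r + g b * SJ + iS (\<alpha> b x) * mn J"
    unfolding mI ad_gen r_def by (simp add: algebra_simps)
  also have "g b * SJ = (\<Sum>m\<in>UNIV. iS (t m) * mn (I(m := I m - 1))) + (\<Sum>m\<in>UNIV. iS (\<alpha> b (t m)) * mn (J(m := J m - 1)))"
    unfolding SJ_def sum_distrib_left termeq by (simp add: sum.distrib)
  finally have "adx x (mn I) - (\<Sum>m\<in>UNIV. iS (of_nat (I m) * \<alpha> m x) * mn (I(m := I m - 1)))
      = g b * r + (\<Sum>m\<in>UNIV. iS (\<alpha> b (t m)) * mn (J(m := J m - 1)))"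
    unfolding SI by (simp add: algebra_simps)
  also have "\<dots> \<in> FF (int (Suc n) - 2)"
  proof (rule FF_add)
    show "g b * r \<in> FF (int (Suc n) - 2)" using gmul[OF r, of b] by simp
    show "(\<Sum>m\<in>UNIV. iS (\<alpha> b (t m)) * mn (J(m := J m - 1))) \<in> FF (int (Suc n) - 2)"
      by (rule FF_sum) (rule rem)
  qed
  finally show ?case using Suc.hyps(2) by simp
qed

end


definition Deq :: "nat \<Rightarrow> ('n::finite \<Rightarrow> nat) set" where
  "Deq n = {I. mdeg I = n}"

lemma finite_Deq: "finite (Deq n)"
  by (rule finite_subset[OF _ finite_Dle[of "int n"]]) (auto simp: Deq_def Dle_def)

lemma Deq_sub: "Deq n \<subseteq> Dle (int n)" by (auto simp: Deq_def Dle_def)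

lemma add1_image: "(\<lambda>J. add1 J m) ` Deq n = {I \<in> Deq (Suc n). 0 < I m}"
proof
  show "(\<lambda>J. add1 J m) ` Deq n \<subseteq> {I \<in> Deq (Suc n). 0 < I m}"
    using mdeg_add1 by (auto simp: Deq_def) (simp add: add1_def)
  show "{I \<in> Deq (Suc n). 0 < I m} \<subseteq> (\<lambda>J. add1 J m) ` Deq n"
  proof
    fix I :: "'a \<Rightarrow> nat" assume "I \<in> {I \<in> Deq (Suc n). 0 < I m}"
    hence I: "mdeg I = Suc n" "0 < I m" by (auto simp: Deq_def)
    have "mdeg (I(m := I m - 1)) + I m = mdeg I + (I m - 1)" by (rule mdeg_upd)
    hence "I(m := I m - 1) \<in> Deq n" using I by (simp add: Deq_def)
    moreover have "I = add1 (I(m := I m - 1)) m" using I by (auto simp: add1_def fun_eq_iff)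
    ultimately show "I \<in> (\<lambda>J. add1 J m) ` Deq n" by blast
  qed
qed

lemma add1_inj: "inj_on (\<lambda>J. add1 J m) A"
proof (rule inj_onI)
  fix J K assume "add1 J m = add1 K m"
  hence "(add1 J m)(m := J m) = (add1 K m)(m := K m)"
    by (metis Suc_inject add1_def fun_upd_same)
  thus "J = K" by (simp add: add1_def)
qed

context env begin

lemma tri_solve:
  assumes h: "\<And>k. (\<Sum>m\<in>UNIV. v m * \<alpha> m (pvar k)) = 0"
  shows "v m = 0"
proof (rule ccontr)
  assume "v m \<noteq> 0"
  define k where "k = Min {m. v m \<noteq> 0}"
  have kin: "v k \<noteq> 0" unfolding k_def using \<open>v m \<noteq> 0\<close>
    by (metis (mono_tags) Min_in empty_iff finite mem_Collect_eq)
  have below: "j < k \<Longrightarrow> v j = 0" for j unfolding k_def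
    by (metis (mono_tags) Min_le finite leD mem_Collect_eq)
  have above: "k < j \<Longrightarrow> \<alpha> j (pvar k) = 0" for j using tri by (simp add: triangularizable_def)
  have "(\<Sum>m\<in>UNIV. v m * \<alpha> m (pvar k)) = (\<Sum>m\<in>UNIV. if m = k then v k * \<alpha> k (pvar k) else 0)"
  proof (rule sum.cong)
    fix j :: 'n
    show "v j * \<alpha> j (pvar k) = (if j = k then v k * \<alpha> k (pvar k) else 0)"
      using below[of j] above[of j] by (cases j k rule: linorder_cases) auto
  qed simp
  also have "\<dots> = v k * \<alpha> k (pvar k)" by simp
  finally have "v k * \<alpha> k (pvar k) = 0" using h by simp
  moreover have "\<alpha> k (pvar k) \<noteq> 0"
  proof
    assume "\<alpha> k (pvar k) = 0"
    hence "(\<Prod>i\<in>UNIV. \<alpha> i (pvar i)) = 0" by (simp add: prod_zero_iff) blast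
    thus False using tri by (simp add: triangularizable_def)
  qed
  ultimately show False using kin by simp
qed


lemma SI_low: "(\<Sum>m\<in>UNIV. iS (of_nat (I m) * \<alpha> m x) * mn (I(m := I m - 1))) \<in> FF (int (mdeg I) - 1)"
proof (rule FF_sum)
  fix m
  show "iS (of_nat (I m) * \<alpha> m x) * mn (I(m := I m - 1)) \<in> FF (int (mdeg I) - 1)"
  proof (cases "I m = 0")
    case True thus ?thesis by (simp add: iS_0 FF_zero)
  next
    case False
    have "mdeg (I(m := I m - 1)) + I m = mdeg I + (I m - 1)" by (rule mdeg_upd)
    hence "int (mdeg (I(m := I m - 1))) \<le> int (mdeg I) - 1" using False by simp
    thus ?thesis by (rule FF_mono)
  qed
qed

lemma ad_sum: "adx x (\<Sum>I\<in>A. iS (f I) * mn I) = (\<Sum>I\<in>A. iS (f I) * adx x (mn I))"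
proof -
  have "adx x (\<Sum>I\<in>A. iS (f I) * mn I) = (\<Sum>I\<in>A. adx x (iS (f I) * mn I))"
    by (simp add: sum_distrib_left sum_distrib_right sum_subtractf)
  also have "\<dots> = (\<Sum>I\<in>A. iS (f I) * adx x (mn I))" by (rule sum.cong[OF refl]) (rule ad_S)
  finally show ?thesis .
qed

lemma main:
  fixes p :: nat and u
  assumes p: "p > 0" and u: "u \<in> FF (int p)" and d: "\<And>k. adx (pvar k) u \<in> FF (int p - 2)"
  shows "u \<in> FF (int p - 1)"
proof -
  obtain f where uf: "u = (\<Sum>I\<in>Dle (int p). iS (f I) * mn I)" using FF_E[OF u] by blast
  obtain q where pq: "p = Suc q" using p by (cases p) auto
  define G where "G x I m = iS (f I * (of_nat (I m) * \<alpha> m x)) * mn (I(m := I m - 1))" for x I m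
  define h where "h x J = (\<Sum>m\<in>UNIV. f (add1 J m) * (of_nat (Suc (J m)) * \<alpha> m x))" for x J
  have key: "(\<Sum>J\<in>Deq q. iS (h (pvar k) J) * mn J) \<in> FF (int p - 2)" for k
  proof -
    define x :: "('n, 'k) pol" where "x = pvar k"
    let ?S = "\<lambda>I. (\<Sum>m\<in>UNIV. iS (of_nat (I m) * \<alpha> m x) * mn (I(m := I m - 1)))"
    have T1: "(\<Sum>I\<in>Deq p. \<Sum>m\<in>UNIV. G x I m) \<in> FF (int p - 2)"
    proof -
      have GS: "(\<Sum>m\<in>UNIV. G x I m) = iS (f I) * ?S I" for I
        by (simp add: G_def sum_distrib_left iS_mult mult.assoc)
      have adu: "adx x u = (\<Sum>I\<in>Dle (int p). iS (f I) * adx x (mn I))" unfolding uf by (rule ad_sum)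
      have split: "(\<Sum>I\<in>Dle (int p). iS (f I) * ?S I) = (\<Sum>I\<in>Deq p. iS (f I) * ?S I) + (\<Sum>I\<in>Dle (int p) - Deq p. iS (f I) * ?S I)"
        using sum.subset_diff[OF Deq_sub finite_Dle] by (simp add: add.commute)
      have A1: "(\<Sum>I\<in>Dle (int p). iS (f I) * (adx x (mn I) - ?S I)) \<in> FF (int p - 2)"
      proof (rule FF_sum, rule FF_smul)
        fix I :: "'n \<Rightarrow> nat" assume "I \<in> Dle (int p)"
        hence "int (mdeg I) - 2 \<le> int p - 2" by (simp add: Dle_def)
        thus "adx x (mn I) - ?S I \<in> FF (int p - 2)" using FF_le ad_mono by blast
      qed
      have A2: "(\<Sum>I\<in>Dle (int p) - Deq p. iS (f I) * ?S I) \<in> FF (int p - 2)"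
      proof (rule FF_sum, rule FF_smul)
        fix I :: "'n \<Rightarrow> nat" assume "I \<in> Dle (int p) - Deq p"
        hence "int (mdeg I) - 1 \<le> int p - 2" by (auto simp: Dle_def Deq_def)
        thus "?S I \<in> FF (int p - 2)" using FF_le SI_low by blast
      qed
      have "(\<Sum>I\<in>Deq p. \<Sum>m\<in>UNIV. G x I m) = adx x u - (\<Sum>I\<in>Dle (int p). iS (f I) * (adx x (mn I) - ?S I)) - (\<Sum>I\<in>Dle (int p) - Deq p. iS (f I) * ?S I)"
        unfolding GS adu right_diff_distrib sum_subtractf split by simp
      also have "\<dots> \<in> FF (int p - 2)" using d[of k] unfolding x_def[symmetric] by (intro FF_diff[OF FF_diff A2] A1)
      finally show ?thesis .
    qed
    have "(\<Sum>I\<in>Deq p. \<Sum>m\<in>UNIV. G x I m) = (\<Sum>m\<in>UNIV. \<Sum>I\<in>Deq p. G x I m)" by (rule sum.swap)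
    also have "\<dots> = (\<Sum>m\<in>UNIV. \<Sum>J\<in>Deq q. iS (f (add1 J m) * (of_nat (Suc (J m)) * \<alpha> m x)) * mn J)"
    proof (rule sum.cong[OF refl])
      fix m
      have "(\<Sum>I\<in>Deq p. G x I m) = (\<Sum>I\<in>{I \<in> Deq p. 0 < I m}. G x I m)"
        by (rule sum.mono_neutral_right) (auto simp: finite_Deq G_def iS_0)
      also have "\<dots> = (\<Sum>I\<in>(\<lambda>J. add1 J m) ` Deq q. G x I m)" unfolding pq add1_image ..
      also have "\<dots> = (\<Sum>J\<in>Deq q. G x (add1 J m) m)" by (simp add: sum.reindex[OF add1_inj])
      also have "\<dots> = (\<Sum>J\<in>Deq q. iS (f (add1 J m) * (of_nat (Suc (J m)) * \<alpha> m x)) * mn J)"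
        by (rule sum.cong[OF refl]) (simp add: G_def add1_def)
      finally show "(\<Sum>I\<in>Deq p. G x I m) = (\<Sum>J\<in>Deq q. iS (f (add1 J m) * (of_nat (Suc (J m)) * \<alpha> m x)) * mn J)" .
    qed
    also have "\<dots> = (\<Sum>J\<in>Deq q. iS (h x J) * mn J)"
      unfolding h_def iS_sum sum_distrib_right by (rule sum.swap)
    finally show ?thesis using T1 unfolding x_def by simp
  qed
  have hz: "h (pvar k) J = 0" if J: "J \<in> Deq q" for k J
  proof -
    obtain c where c: "(\<Sum>J\<in>Deq q. iS (h (pvar k) J) * mn J) = (\<Sum>J\<in>Dle (int p - 2). iS (c J) * mn J)"
      using FF_E[OF key[of k]] by blast
    define c' where "c' J = (if J \<in> Deq q then h (pvar k) J else - c J)" for J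
    have disj: "Deq q \<inter> Dle (int p - 2) = {}" using pq by (auto simp: Deq_def Dle_def)
    have "(\<Sum>J\<in>Deq q \<union> Dle (int p - 2). iS (c' J) * mn J) = (\<Sum>J\<in>Deq q. iS (c' J) * mn J) + (\<Sum>J\<in>Dle (int p - 2). iS (c' J) * mn J)"
      by (rule sum.union_disjoint[OF finite_Deq finite_Dle disj])
    also have "(\<Sum>J\<in>Deq q. iS (c' J) * mn J) = (\<Sum>J\<in>Deq q. iS (h (pvar k) J) * mn J)"
      by (rule sum.cong) (auto simp: c'_def)
    also have "(\<Sum>J\<in>Dle (int p - 2). iS (c' J) * mn J) = (\<Sum>J\<in>Dle (int p - 2). - (iS (c J) * mn J))"
      by (rule sum.cong[OF refl]) (use disj in \<open>auto simp: c'_def iS_minus\<close>)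
    finally have "(\<Sum>J\<in>Deq q \<union> Dle (int p - 2). iS (c' J) * mn J) = 0" using c by (simp add: sum_negf)
    hence "c' J = 0" by (rule uniq[OF finite_UnI[OF finite_Deq finite_Dle]]) (use J in simp)
    thus ?thesis using J by (simp add: c'_def)
  qed
  have fz: "f I = 0" if I: "I \<in> Deq p" for I
  proof -
    have "I \<noteq> (\<lambda>_. 0)"
    proof
      assume "I = (\<lambda>_. 0)" hence "mdeg I = 0" by (simp add: mdeg_def)
      thus False using I p by (simp add: Deq_def)
    qed
    then obtain m where m: "0 < I m" by (auto simp: fun_eq_iff)
    have "I \<in> {I \<in> Deq (Suc q). 0 < I m}" using I m pq by simp
    then obtain J where J: "J \<in> Deq q" "I = add1 J m" unfolding add1_image[symmetric] by blast
    have "(\<Sum>m\<in>UNIV. (f (add1 J m) * of_nat (Suc (J m))) * \<alpha> m (pvar k)) = 0" for k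
      using hz[OF J(1), of k] by (simp add: h_def mult.assoc)
    hence "f (add1 J m) * of_nat (Suc (J m)) = 0" by (rule tri_solve)
    hence "f (add1 J m) = 0" by (simp del: of_nat_Suc)
    thus ?thesis using J by simp
  qed
  have "u = (\<Sum>I\<in>Dle (int p - 1). iS (f I) * mn I)"
    unfolding uf
  proof (rule sum.mono_neutral_right[OF finite_Dle])
    show "Dle (int p - 1) \<subseteq> Dle (int p)" by (auto simp: Dle_def)
    show "\<forall>I\<in>Dle (int p) - Dle (int p - 1). iS (f I) * mn I = 0"
    proof
      fix I :: "'n \<Rightarrow> nat" assume "I \<in> Dle (int p) - Dle (int p - 1)"
      hence "I \<in> Deq p" by (auto simp: Dle_def Deq_def)
      thus "iS (f I) * mn I = 0" using fz by (simp add: iS_0)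
    qed
  qed
  thus ?thesis by (rule FF_I)
qed

end

theorem proposition3p2:
  fixes \<alpha> :: "'n::{finite,linorder} \<Rightarrow> ('n, 'k::field_char_0) pol \<Rightarrow> ('n, 'k) pol"
    and iS :: "('n, 'k) pol \<Rightarrow> 'u::ring_1"
    and iL :: "(('n, 'k) pol \<Rightarrow> ('n, 'k) pol) \<Rightarrow> 'u"
    and p :: nat and u :: 'u
  assumes "triangularizable \<alpha>"
    and "is_enveloping \<alpha> iS iL"
    and "p > 0"
    and "u \<in> filtU iS (\<lambda>i. iL (\<alpha> i)) (int p)"
    and "d0 iS u \<in> filtX1 iS (\<lambda>i. iL (\<alpha> i)) (int p - 2)"
  shows "u \<in> filtU iS (\<lambda>i. iL (\<alpha> i)) (int p - 1)"
proof -
  interpret E: env \<alpha> iS iL by (rule env.intro) (rule assms(1), rule assms(2))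
  have FFeq: "filtU iS (\<lambda>i. iL (\<alpha> i)) q = E.FF q" for q by (rule E.filtU_FF)
  have u: "u \<in> E.FF (int p)" using assms(4) FFeq by simp
  have d: "u * iS (pvar k) - iS (pvar k) * u \<in> E.FF (int p - 2)" for k
    using assms(5) unfolding filtX1_def d0_def FFeq by simp
  show ?thesis using E.main[OF assms(3) u d] FFeq by simp
qed

end
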